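(* Let $m$ be a positive integer. Then \[ \frac{d^m}{dz^m}\csc^2(\pi z)=2(-\pi)^m\csc^{m+2}(\pi z)P_m(z), \] where $P_m(z)=\sum_{0\le j\le m,\ j\equiv m\ (\mathrm{mod}\ 2)}a_{m,j}\cos(j\pi z)$ for real constants $a_{m,j}$ satisfying: (i) $a_{m,j}>0$ for all $0\le j\le m$ with $j\equiv m\pmod 2$; (ii) $\sum_{0\le j\le m,\ j\equiv m\ (\mathrm{mod}\ 2)}a_{m,j}=\frac{(m+1)!}{2}$; (iii) $a_{m,m}=1$.
   Context: $\csc x=1/\sin x$. *)

theory Defs
  imports "HOL-Analysis.Analysis"
begin

definition csc :: "complex \<Rightarrow> complex" where
  "csc x = 1 / sin x"

end

theory Submission
  imports Defs
begin

fun bc :: "nat \<Rightarrow> nat \<Rightarrow> real" where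
  "bc 0 j = (if j = 0 then 1/2 else 0)"
| "bc (Suc m) k = (real m + 3 + real k)/2 * bc m (k+1)
     + (case k of 0 \<Rightarrow> 0 | Suc i \<Rightarrow> (real m + 2 - real i)/2 * bc m i)
     + (if k = 1 then (real m + 2)/2 * bc m 0 else 0)"

lemma bc_supp: "j > m \<Longrightarrow> bc m j = 0"
proof (induction m arbitrary: j)
  case 0 then show ?case by simp
next
  case (Suc m) then show ?case by (auto split: nat.split)
qed

lemma bc_par: "j mod 2 \<noteq> m mod 2 \<Longrightarrow> bc m j = 0"
proof (induction m arbitrary: j)
  case 0 then show ?case by simp
next
  case (Suc m)
  have a: "bc m (j+1) = 0" using Suc by (intro Suc.IH) presburger
  have b: "(case j of 0 \<Rightarrow> 0 | Suc i \<Rightarrow> (real m + 2 - real i)/2 * bc m i) = 0"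
    using Suc by (auto split: nat.split intro!: Suc.IH) presburger
  have c: "j = 1 \<Longrightarrow> bc m 0 = 0" using Suc by (intro Suc.IH) presburger
  show ?case using a b c by simp
qed

lemma bc_nonneg: "bc m j \<ge> 0"
proof (induction m arbitrary: j)
  case 0 then show ?case by simp
next
  case (Suc m)
  have b: "(case j of 0 \<Rightarrow> 0 | Suc i \<Rightarrow> (real m + 2 - real i)/2 * bc m i) \<ge> 0"
  proof (cases j)
    case (Suc i)
    show ?thesis
    proof (cases "i \<le> m")
      case True then show ?thesis using Suc.IH[of i] \<open>j = Suc i\<close> by simp
    next
      case False then show ?thesis using bc_supp[of m i] \<open>j = Suc i\<close> by simp
    qed
  qed simp
  show ?case using b Suc.IH[of "j+1"] Suc.IH[of 0] by simp
qed

lemma bc_pos: "j \<le> m \<Longrightarrow> j mod 2 = m mod 2 \<Longrightarrow> bc m j > 0"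
proof (induction m arbitrary: j)
  case 0 then show ?case by simp
next
  case (Suc m)
  have b: "(case j of 0 \<Rightarrow> 0 | Suc i \<Rightarrow> (real m + 2 - real i)/2 * bc m i) \<ge> 0"
  proof (cases j)
    case (Suc i)
    show ?thesis
    proof (cases "i \<le> m")
      case True then show ?thesis using bc_nonneg[of m i] \<open>j = Suc i\<close> by simp
    next
      case False then show ?thesis using bc_supp[of m i] \<open>j = Suc i\<close> by simp
    qed
  qed simp
  have t1: "(real m + 3 + real j)/2 * bc m (j+1) \<ge> 0" using bc_nonneg[of m "j+1"] by simp
  have t3: "(if j = 1 then (real m + 2)/2 * bc m 0 else 0) \<ge> 0" using bc_nonneg[of m 0] by simp
  show ?case
  proof (cases j)
    case 0
    then have "m \<ge> 1" "1 mod 2 = m mod 2" using Suc.prems by presburger+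
    then have "bc m 1 > 0" using Suc.IH by simp
    then have "(real m + 3 + real j)/2 * bc m (j+1) > 0" using 0 by simp
    then show ?thesis using b t3 by simp
  next
    case (Suc i)
    then have "i \<le> m" "i mod 2 = m mod 2" using Suc.prems by presburger+
    then have "(real m + 2 - real i)/2 * bc m i > 0" using Suc.IH by simp
    then show ?thesis using t1 t3 Suc by simp
  qed
qed

lemma bc_top: "m \<ge> 1 \<Longrightarrow> bc m m = 1"
proof (induction m)
  case 0 then show ?case by simp
next
  case (Suc m)
  show ?case
  proof (cases m)
    case 0 then show ?thesis by simp
  next
    case (Suc k)
    then show ?thesis using Suc.IH bc_supp[of m "Suc (Suc m)"] by simp
  qed
qed

lemma term_id:
  fixes x :: complex and M :: real and j :: nat
  shows "of_real M * cos x * cos (of_nat j * x) + of_nat j * sin x * sin (of_nat j * x)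
    = of_real ((M + real j)/2) * cos ((of_nat j - 1) * x) + of_real ((M - real j)/2) * cos ((of_nat j + 1) * x)"
proof -
  have e1: "(of_nat j - 1) * x = of_nat j * x - x" by (simp add: algebra_simps)
  have e2: "(of_nat j + 1) * x = of_nat j * x + x" by (simp add: algebra_simps)
  show ?thesis unfolding e1 e2 cos_diff cos_add by (simp add: field_simps)
qed

lemma key:
  fixes b :: "nat \<Rightarrow> real" and M :: real and n :: nat and x :: complex
  assumes supp: "\<forall>j\<ge>n. b j = 0"
  shows "(\<Sum>k\<le>n. of_real ((M + 1 + real k)/2 * b (k+1)
             + (case k of 0 \<Rightarrow> 0 | Suc i \<Rightarrow> (M - real i)/2 * b i)
             + (if k = 1 then M/2 * b 0 else 0)) * cos (of_nat k * x))
       = (\<Sum>j\<le>n. of_real (b j) * (of_real M * cos x * cos (of_nat j * x) + of_nat j * sin x * sin (of_nat j * x)))"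
proof -
  define C where "C k = cos (of_nat k * x)" for k
  have R: "(\<Sum>j\<le>n. of_real (b j) * (of_real M * cos x * cos (of_nat j * x) + of_nat j * sin x * sin (of_nat j * x)))
     = (\<Sum>j\<le>n. of_real (b j * (M + real j)/2) * cos ((of_nat j - 1) * x))
       + (\<Sum>j\<le>n. of_real (b j * (M - real j)/2) * C (j+1))"
    unfolding term_id sum.distrib[symmetric] C_def
    by (intro sum.cong) (auto simp: algebra_simps)
  have A: "(\<Sum>j\<le>n. of_real (b j * (M + real j)/2) * cos ((of_nat j - 1) * x))
      = of_real (M/2 * b 0) * C 1 + (\<Sum>k\<le>n. of_real ((M + 1 + real k)/2 * b (k+1)) * C k)"
  proof -
    have "(\<Sum>j\<le>n. of_real (b j * (M + real j)/2) * cos ((of_nat j - 1) * x))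
       = (\<Sum>j<Suc n. of_real (b j * (M + real j)/2) * cos ((of_nat j - 1) * x))"
      by (simp add: lessThan_Suc_atMost)
    also have "\<dots> = of_real (M/2 * b 0) * C 1 + (\<Sum>k<n. of_real ((M + 1 + real k)/2 * b (k+1)) * C k)"
      unfolding sum.lessThan_Suc_shift C_def by (simp add: algebra_simps)
    also have "(\<Sum>k<n. of_real ((M + 1 + real k)/2 * b (k+1)) * C k) = (\<Sum>k\<le>n. of_real ((M + 1 + real k)/2 * b (k+1)) * C k)"
      using supp by (simp add: lessThan_Suc_atMost[symmetric])
    finally show ?thesis .
  qed
  have B: "(\<Sum>j\<le>n. of_real (b j * (M - real j)/2) * C (j+1))
      = (\<Sum>k\<le>n. of_real (case k of 0 \<Rightarrow> 0 | Suc i \<Rightarrow> (M - real i)/2 * b i) * C k)"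
  proof -
    have "(\<Sum>k\<le>n. of_real (case k of 0 \<Rightarrow> 0 | Suc i \<Rightarrow> (M - real i)/2 * b i) * C k)
       = (\<Sum>k<Suc n. of_real (case k of 0 \<Rightarrow> 0 | Suc i \<Rightarrow> (M - real i)/2 * b i) * C k)"
      by (simp add: lessThan_Suc_atMost)
    also have "\<dots> = (\<Sum>i<n. of_real ((M - real i)/2 * b i) * C (Suc i))"
      unfolding sum.lessThan_Suc_shift by simp
    also have "\<dots> = (\<Sum>i\<le>n. of_real ((M - real i)/2 * b i) * C (Suc i))"
      using supp by (simp add: lessThan_Suc_atMost[symmetric])
    finally show ?thesis by (simp add: algebra_simps)
  qed
  have D: "(\<Sum>k\<le>n. of_real (if k = 1 then M/2 * b 0 else 0) * C k) = of_real (M/2 * b 0) * C 1"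
  proof (cases "n = 0")
    case True then show ?thesis using supp by simp
  next
    case False
    have "(\<Sum>k\<le>n. of_real (if k = 1 then M/2 * b 0 else 0) * C k) = (\<Sum>k\<le>n. if k = 1 then of_real (M/2 * b 0) * C k else 0)"
      by (intro sum.cong) auto
    also have "\<dots> = of_real (M/2 * b 0) * C 1" using False by (subst sum.delta) auto
    finally show ?thesis .
  qed
  have L: "(\<Sum>k\<le>n. of_real ((M + 1 + real k)/2 * b (k+1)
             + (case k of 0 \<Rightarrow> 0 | Suc i \<Rightarrow> (M - real i)/2 * b i)
             + (if k = 1 then M/2 * b 0 else 0)) * cos (of_nat k * x))
     = (\<Sum>k\<le>n. of_real ((M + 1 + real k)/2 * b (k+1)) * C k)
       + (\<Sum>k\<le>n. of_real (case k of 0 \<Rightarrow> 0 | Suc i \<Rightarrow> (M - real i)/2 * b i) * C k)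
       + (\<Sum>k\<le>n. of_real (if k = 1 then M/2 * b 0 else 0) * C k)"
    unfolding sum.distrib[symmetric] C_def by (intro sum.cong) (simp_all only: of_real_add distrib_right)
  show ?thesis unfolding L R A B D by simp
qed

lemma alg:
  fixes s c P Q p :: complex and m :: nat
  assumes "s \<noteq> 0"
  shows "(k * (- p * Q) * s ^ (m+2) - k * P * (of_nat (m+2) * ((c * p) * s ^ (m+2 - Suc 0)))) / (s^(m+2) * s^(m+2))
     = k * (- p) * (of_real (real m + 2) * c * P + s * Q) / s ^ (Suc m + 2)"
proof -
  have e: "s^(m+2) = s^(m+1) * s" "s ^ (Suc m + 2) = s^(m+1) * s * s" by simp_all
  have e2: "m+2 - Suc 0 = m+1" by simp
  show ?thesis unfolding e2 e using assms by (simp add: field_simps)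
qed

definition P :: "nat \<Rightarrow> complex \<Rightarrow> complex" where
  "P m z = (\<Sum>j\<le>m. of_real (bc m j) * cos (of_nat j * of_real pi * z))"

definition G :: "nat \<Rightarrow> complex \<Rightarrow> complex" where
  "G m z = 2 * (- of_real pi) ^ m * P m z / sin (of_real pi * z) ^ (m+2)"

lemma P_Suc:
  fixes z :: complex
  shows "P (Suc m) z = of_real (real m + 2) * cos (of_real pi * z) * P m z
     + sin (of_real pi * z) * (\<Sum>j\<le>m. of_real (bc m j) * of_nat j * sin (of_nat j * of_real pi * z))"
proof -
  have supp: "\<forall>j\<ge>Suc m. bc m j = 0" using bc_supp by simp
  note K = key[OF supp, of "real m + 2" "of_real pi * z"]
  have "P (Suc m) z = (\<Sum>k\<le>Suc m. of_real ((real m + 2 + 1 + real k)/2 * bc m (k+1)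
             + (case k of 0 \<Rightarrow> 0 | Suc i \<Rightarrow> (real m + 2 - real i)/2 * bc m i)
             + (if k = 1 then (real m + 2)/2 * bc m 0 else 0)) * cos (of_nat k * (of_real pi * z)))"
    unfolding P_def by (intro sum.cong refl) (simp add: mult.assoc add.commute add.left_commute)
  also have "\<dots> = (\<Sum>j\<le>Suc m. of_real (bc m j) * (of_real (real m + 2) * cos (of_real pi * z) * cos (of_nat j * (of_real pi * z))
       + of_nat j * sin (of_real pi * z) * sin (of_nat j * (of_real pi * z))))"
    by (rule K)
  also have "\<dots> = (\<Sum>j\<le>m. of_real (bc m j) * (of_real (real m + 2) * cos (of_real pi * z) * cos (of_nat j * (of_real pi * z))
       + of_nat j * sin (of_real pi * z) * sin (of_nat j * (of_real pi * z))))"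
    using bc_supp[of m "Suc m"] by simp
  also have "\<dots> = of_real (real m + 2) * cos (of_real pi * z) * P m z
     + sin (of_real pi * z) * (\<Sum>j\<le>m. of_real (bc m j) * of_nat j * sin (of_nat j * of_real pi * z))"
    unfolding P_def sum_distrib_left sum.distrib[symmetric]
    by (intro sum.cong refl) (simp add: algebra_simps)
  finally show ?thesis .
qed

lemma dP:
  fixes z :: complex
  shows "(P m has_field_derivative - of_real pi * (\<Sum>j\<le>m. of_real (bc m j) * of_nat j * sin (of_nat j * of_real pi * z))) (at z)"
proof -
  have "(P m has_field_derivative (\<Sum>j\<le>m. of_real (bc m j) * (- sin (of_nat j * of_real pi * z) * (of_nat j * of_real pi)))) (at z)"
    unfolding P_def[abs_def]
    by (intro DERIV_sum DERIV_cmult) (auto intro!: derivative_eq_intros)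
  moreover have "(\<Sum>j\<le>m. of_real (bc m j) * (- sin (of_nat j * of_real pi * z) * (of_nat j * of_real pi)))
     = - of_real pi * (\<Sum>j\<le>m. of_real (bc m j) * of_nat j * sin (of_nat j * of_real pi * z))"
    unfolding sum_distrib_left by (intro sum.cong refl) (simp add: algebra_simps)
  ultimately show ?thesis by simp
qed

lemma dG:
  fixes z :: complex
  assumes s: "sin (of_real pi * z) \<noteq> 0"
  shows "(G m has_field_derivative G (Suc m) z) (at z)"
proof -
  define Q where "Q = (\<Sum>j\<le>m. of_real (bc m j) * of_nat j * sin (of_nat j * of_real pi * z))"
  have ds: "((\<lambda>w. sin (of_real pi * w) ^ (m+2)) has_field_derivative
       of_nat (m+2) * ((cos (of_real pi * z) * of_real pi) * sin (of_real pi * z) ^ (m+2 - Suc 0))) (at z)"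
  proof -
    have "((\<lambda>w. sin (of_real pi * w)) has_field_derivative cos (of_real pi * z) * of_real pi) (at z)"
      by (auto intro!: derivative_eq_intros)
    from DERIV_power[OF this, of "m+2"] show ?thesis .
  qed
  have dn: "((\<lambda>w. 2 * (- of_real pi) ^ m * P m w) has_field_derivative
       2 * (- of_real pi) ^ m * (- of_real pi * Q)) (at z)"
    unfolding Q_def by (intro DERIV_cmult dP)
  have "(G m has_field_derivative
     (2 * (- of_real pi) ^ m * (- of_real pi * Q) * sin (of_real pi * z) ^ (m+2)
       - 2 * (- of_real pi) ^ m * P m z * (of_nat (m+2) * ((cos (of_real pi * z) * of_real pi) * sin (of_real pi * z) ^ (m+2 - Suc 0))))
      / (sin (of_real pi * z) ^ (m+2) * sin (of_real pi * z) ^ (m+2))) (at z)"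
    unfolding G_def[abs_def] using DERIV_divide[OF dn ds] s by simp
  also have "(2 * (- of_real pi) ^ m * (- of_real pi * Q) * sin (of_real pi * z) ^ (m+2)
       - 2 * (- of_real pi) ^ m * P m z * (of_nat (m+2) * ((cos (of_real pi * z) * of_real pi) * sin (of_real pi * z) ^ (m+2 - Suc 0))))
      / (sin (of_real pi * z) ^ (m+2) * sin (of_real pi * z) ^ (m+2))
     = 2 * (- of_real pi) ^ m * (- of_real pi) * (of_real (real m + 2) * cos (of_real pi * z) * P m z + sin (of_real pi * z) * Q) / sin (of_real pi * z) ^ (Suc m + 2)"
    by (rule alg[OF s])
  also have "\<dots> = G (Suc m) z"
    unfolding G_def P_Suc Q_def by simp
  finally show ?thesis .
qed

lemma bc_sum: "(\<Sum>j\<le>m. bc m j) = fact (m+1) / 2"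
proof (induction m)
  case 0 then show ?case by simp
next
  case (Suc m)
  have supp: "\<forall>j\<ge>Suc m. bc m j = 0" using bc_supp by simp
  note K = key[OF supp, of "real m + 2" 0]
  have "complex_of_real (\<Sum>k\<le>Suc m. bc (Suc m) k) = (\<Sum>k\<le>Suc m. of_real ((real m + 2 + 1 + real k)/2 * bc m (k+1)
             + (case k of 0 \<Rightarrow> 0 | Suc i \<Rightarrow> (real m + 2 - real i)/2 * bc m i)
             + (if k = 1 then (real m + 2)/2 * bc m 0 else 0)) * cos (of_nat k * 0))"
    unfolding of_real_sum by (intro sum.cong refl) (simp add: add.commute add.left_commute)
  also have "\<dots> = (\<Sum>j\<le>Suc m. of_real (bc m j) * of_real (real m + 2))"
    unfolding K by simp
  also have "\<dots> = of_real ((\<Sum>j\<le>m. bc m j) * (real m + 2))"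
    using bc_supp[of m "Suc m"] by (simp add: sum_distrib_right)
  finally have "(\<Sum>k\<le>Suc m. bc (Suc m) k) = (\<Sum>j\<le>m. bc m j) * (real m + 2)"
    using of_real_eq_iff by blast
  then show ?case using Suc.IH by (simp add: algebra_simps)
qed

lemma sin_nz:
  fixes z :: complex
  assumes "z \<notin> \<int>"
  shows "sin (of_real pi * z) \<noteq> 0"
proof
  assume "sin (of_real pi * z) = 0"
  then obtain n :: int where "of_real pi * z = of_real (of_int n * pi)" by (auto simp: sin_eq_0)
  then have "z = of_int n" by (simp add: mult.commute)
  then show False using assms by simp
qed

lemma iter_G:
  "\<forall>z::complex. z \<notin> \<int> \<longrightarrow> (deriv ^^ m) (\<lambda>w. (csc (of_real pi * w))\<^sup>2) z = G m z"
proof (induction m)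
  case 0
  show ?case by (auto simp: G_def P_def csc_def power_one_over power2_eq_square)
next
  case (Suc m)
  show ?case
  proof (intro allI impI)
    fix z :: complex assume z: "z \<notin> \<int>"
    have "((deriv ^^ m) (\<lambda>w. (csc (of_real pi * w))\<^sup>2) has_field_derivative G (Suc m) z) (at z)"
      by (rule has_field_derivative_transform_within_open[OF dG[OF sin_nz[OF z]], of "- \<int>"])
         (use z Suc.IH in auto)
    then show "(deriv ^^ Suc m) (\<lambda>w. (csc (of_real pi * w))\<^sup>2) z = G (Suc m) z"
      by (simp add: DERIV_imp_deriv)
  qed
qed

theorem lemma2p21:
  fixes m :: nat
  assumes "m \<ge> 1"
  shows "\<exists>a :: nat \<Rightarrow> real.
           (\<forall>j\<in>{j. j \<le> m \<and> j mod 2 = m mod 2}. a j > 0) \<and>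
           (\<Sum>j\<in>{j. j \<le> m \<and> j mod 2 = m mod 2}. a j) = fact (m + 1) / 2 \<and>
           a m = 1 \<and>
           (\<forall>z::complex. z \<notin> \<int> \<longrightarrow>
              (deriv ^^ m) (\<lambda>w. (csc (of_real pi * w))\<^sup>2) z =
                2 * (- of_real pi) ^ m * (csc (of_real pi * z)) ^ (m + 2) *
                (\<Sum>j\<in>{j. j \<le> m \<and> j mod 2 = m mod 2}.
                    of_real (a j) * cos (of_nat j * of_real pi * z)))"
proof (intro exI[of _ "bc m"] conjI ballI allI impI)
  define S where "S = {j. j \<le> m \<and> j mod 2 = m mod 2}"
  have S: "S \<subseteq> {..m}" "finite {..m}" unfolding S_def by auto
  fix j assume "j \<in> {j. j \<le> m \<and> j mod 2 = m mod 2}"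
  then show "bc m j > 0" using bc_pos by auto
next
  define S where "S = {j. j \<le> m \<and> j mod 2 = m mod 2}"
  have S: "S \<subseteq> {..m}" "finite {..m}" unfolding S_def by auto
  have "(\<Sum>j\<in>S. bc m j) = (\<Sum>j\<le>m. bc m j)"
    by (rule sum.mono_neutral_left[OF S(2) S(1)]) (auto simp: S_def bc_par)
  then show "(\<Sum>j\<in>{j. j \<le> m \<and> j mod 2 = m mod 2}. bc m j) = fact (m + 1) / 2"
    using bc_sum S_def by simp
next
  show "bc m m = 1" using bc_top assms by simp
next
  fix z :: complex assume z: "z \<notin> \<int>"
  define S where "S = {j. j \<le> m \<and> j mod 2 = m mod 2}"
  have S: "S \<subseteq> {..m}" "finite {..m}" unfolding S_def by auto
  have "(\<Sum>j\<in>S. of_real (bc m j) * cos (of_nat j * of_real pi * z)) = P m z"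
    unfolding P_def
    by (rule sum.mono_neutral_left[OF S(2) S(1)]) (auto simp: S_def bc_par)
  then show "(deriv ^^ m) (\<lambda>w. (csc (of_real pi * w))\<^sup>2) z =
                2 * (- of_real pi) ^ m * (csc (of_real pi * z)) ^ (m + 2) *
                (\<Sum>j\<in>{j. j \<le> m \<and> j mod 2 = m mod 2}.
                    of_real (bc m j) * cos (of_nat j * of_real pi * z))"
    using iter_G z by (simp add: S_def G_def csc_def power_one_over)
qed
end
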